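(* Let $n\ge2$ and let $\mathbf{Z}^*$, $\mathbf{m}$, $\mathbf{S}$, $\mathbf{D}$ be as in the context. Then the partial maxima BLUE of $\theta_2$ has the form \[ L_2=\frac{\mathbf{m}'\mathbf{S}^{-1}\mathbf{Z}^*}{\mathbf{m}'\mathbf{S}^{-1}\mathbf{m}},\qquad\text{with}\qquad \operatorname{Var}[L_2]=\frac{\theta_2^2}{\mathbf{m}'\mathbf{S}^{-1}\mathbf{m}}, \] and the partial maxima BLIE of $\theta_2$ has the form \[ T_2=\mathbf{m}'\mathbf{D}^{-1}\mathbf{Z}^*,\qquad\text{with}\qquad \mathrm{MSE}[T_2]=(1-\mathbf{m}'\mathbf{D}^{-1}\mathbf{m})\theta_2^2. \]
   Context: $F$ is a known, parameter-free, non-degenerate distribution function on $\mathbb{R}$ with finite variance. For unknown $\theta_1\in\mathbb{R}$, $\theta_2>0$, $X_1^*,\dots,X_n^*$ are i.i.d. with distribution function $F((x-\theta_1)/\theta_2)$ and $X^*_{j:j}=\max\{X_1^*,\dots,X_j^*\}$; $X_1,\dots,X_n$ are i.i.d. from $F$ and $X_{j:j}=\max\{X_1,\dots,X_j\}$. Partial maxima spacings: $Z_i^*=X^*_{i+1:i+1}-X^*_{i:i}$, $Z_i=X_{i+1:i+1}-X_{i:i}$, $i=1,\dots,n-1$; $\mathbf{Z}^*=(Z_1^*,\dots,Z^*_{n-1})'$, $\mathbf{Z}=(Z_1,\dots,Z_{n-1})'$, $\mathbf{m}=\mathbb{E}[\mathbf{Z}]$, $\mathbf{S}$ the covariance matrix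 of $\mathbf{Z}$, $\mathbf{D}=\mathbb{E}[\mathbf{Z}\mathbf{Z}']$ (both positive definite). Linear estimators are $\sum_i c_iX^*_{i:i}$ with constant $c_i$. The BLUE of $\theta_2$ is the linear estimator unbiased for $\theta_2$ for all $(\theta_1,\theta_2)$ with minimum variance. A linear statistic $L=\mathbf{c}'\mathbf{X}^*$ is invariant for $\theta_2$ if $L(b\mathbf{X}^*+a\mathbf{1})=bL(\mathbf{X}^* )$ for all $a\in\mathbb{R}$, $b>0$; the BLIE of $\theta_2$ minimizes $\mathbb{E}[L-\theta_2]^2$ among such statistics. *)

theory Defs
  imports "HOL-Probability.Probability" "Jordan_Normal_Form.Gauss_Jordan_Elimination"
begin

definition pmax :: "nat \<Rightarrow> (nat \<Rightarrow> real) \<Rightarrow> real" where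
  "pmax j x = Max (x ` {1..j})"

text \<open>Law of the sample X*_1..X*_n: i.i.d. with distribution function F((x-a)/b),
  where M is the law with distribution function F.\<close>
definition sample_law :: "nat \<Rightarrow> real measure \<Rightarrow> real \<Rightarrow> real \<Rightarrow> (nat \<Rightarrow> real) measure" where
  "sample_law n M a b = PiM {1..n} (\<lambda>_. distr M borel (\<lambda>x. a + b * x))"

definition Ex :: "nat \<Rightarrow> real measure \<Rightarrow> real \<Rightarrow> real \<Rightarrow> ((nat \<Rightarrow> real) \<Rightarrow> real) \<Rightarrow> real" where
  "Ex n M a b g = integral\<^sup>L (sample_law n M a b) g"

definition Var :: "nat \<Rightarrow> real measure \<Rightarrow> real \<Rightarrow> real \<Rightarrow> ((nat \<Rightarrow> real) \<Rightarrow> real) \<Rightarrow> real" where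
  "Var n M a b g = Ex n M a b (\<lambda>\<omega>. (g \<omega> - Ex n M a b g)\<^sup>2)"

definition MSE2 :: "nat \<Rightarrow> real measure \<Rightarrow> real \<Rightarrow> real \<Rightarrow> ((nat \<Rightarrow> real) \<Rightarrow> real) \<Rightarrow> real" where
  "MSE2 n M a b g = Ex n M a b (\<lambda>\<omega>. (g \<omega> - b)\<^sup>2)"

definition linform :: "nat \<Rightarrow> (nat \<Rightarrow> real) \<Rightarrow> (nat \<Rightarrow> real) \<Rightarrow> real" where
  "linform n c y = (\<Sum>j\<in>{1..n}. c j * y j)"

definition linest :: "nat \<Rightarrow> (nat \<Rightarrow> real) \<Rightarrow> (nat \<Rightarrow> real) \<Rightarrow> real" where
  "linest n c \<omega> = linform n c (\<lambda>j. pmax j \<omega>)"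

definition unbiased2 :: "nat \<Rightarrow> real measure \<Rightarrow> (nat \<Rightarrow> real) \<Rightarrow> bool" where
  "unbiased2 n M c \<longleftrightarrow> (\<forall>a b. b > 0 \<longrightarrow> Ex n M a b (linest n c) = b)"

definition is_BLUE2 :: "nat \<Rightarrow> real measure \<Rightarrow> (nat \<Rightarrow> real) \<Rightarrow> bool" where
  "is_BLUE2 n M c \<longleftrightarrow> unbiased2 n M c \<and>
     (\<forall>d. unbiased2 n M d \<longrightarrow>
        (\<forall>a b. b > 0 \<longrightarrow> Var n M a b (linest n c) \<le> Var n M a b (linest n d)))"

definition invariant2 :: "nat \<Rightarrow> (nat \<Rightarrow> real) \<Rightarrow> bool" where
  "invariant2 n c \<longleftrightarrow>
     (\<forall>y a b. b > 0 \<longrightarrow> linform n c (\<lambda>j. b * y j + a) = b * linform n c y)"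

definition is_BLIE2 :: "nat \<Rightarrow> real measure \<Rightarrow> (nat \<Rightarrow> real) \<Rightarrow> bool" where
  "is_BLIE2 n M c \<longleftrightarrow> invariant2 n c \<and>
     (\<forall>d. invariant2 n d \<longrightarrow>
        (\<forall>a b. b > 0 \<longrightarrow> MSE2 n M a b (linest n c) \<le> MSE2 n M a b (linest n d)))"

text \<open>Spacings vector (y_2-y_1, ..., y_n-y_{n-1}) as a JNF vector of dimension n-1
  (0-based: entry i is y_{i+2} - y_{i+1}).\<close>
definition spacings :: "nat \<Rightarrow> (nat \<Rightarrow> real) \<Rightarrow> real vec" where
  "spacings n y = vec (n - 1) (\<lambda>i. y (i + 2) - y (i + 1))"

text \<open>Standard-sample spacing Z_{i+1} (0-based index i) and the moments m, S, D,
  computed under the standard law (i.i.d. from F).\<close>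
definition Zs :: "nat \<Rightarrow> (nat \<Rightarrow> real) \<Rightarrow> real" where
  "Zs i \<omega> = pmax (i + 2) \<omega> - pmax (i + 1) \<omega>"

definition mvec :: "nat \<Rightarrow> real measure \<Rightarrow> real vec" where
  "mvec n M = vec (n - 1) (\<lambda>i. integral\<^sup>L (PiM {1..n} (\<lambda>_. M)) (Zs i))"

definition Smat :: "nat \<Rightarrow> real measure \<Rightarrow> real mat" where
  "Smat n M = mat (n - 1) (n - 1) (\<lambda>(i, j).
     integral\<^sup>L (PiM {1..n} (\<lambda>_. M)) (\<lambda>\<omega>. Zs i \<omega> * Zs j \<omega>)
     - integral\<^sup>L (PiM {1..n} (\<lambda>_. M)) (Zs i) * integral\<^sup>L (PiM {1..n} (\<lambda>_. M)) (Zs j))"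

definition Dmat :: "nat \<Rightarrow> real measure \<Rightarrow> real mat" where
  "Dmat n M = mat (n - 1) (n - 1) (\<lambda>(i, j).
     integral\<^sup>L (PiM {1..n} (\<lambda>_. M)) (\<lambda>\<omega>. Zs i \<omega> * Zs j \<omega>))"

definition pos_def_mat :: "real mat \<Rightarrow> bool" where
  "pos_def_mat A \<longleftrightarrow> A \<in> carrier_mat (dim_row A) (dim_row A) \<and>
     (\<forall>v \<in> carrier_vec (dim_row A). v \<noteq> 0\<^sub>v (dim_row A) \<longrightarrow> v \<bullet> (A *\<^sub>v v) > 0)"

definition minv :: "real mat \<Rightarrow> real mat" where
  "minv A = the (mat_inverse A)"

end

theory Submission imports Defs "Jordan_Normal_Form.Determinant" begin

definition symm :: "nat \<Rightarrow> real mat \<Rightarrow> bool" where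
  "symm k A \<longleftrightarrow> (\<forall>i<k. \<forall>j<k. A $$ (i,j) = A $$ (j,i))"

lemma bil_sum:
  assumes A: "A \<in> carrier_mat k k" and x: "x \<in> carrier_vec k" and y: "y \<in> carrier_vec k"
  shows "x \<bullet> (A *\<^sub>v y) = (\<Sum>i<k. \<Sum>j<k. x$i * A$$(i,j) * y$j)"
proof -
  have "x \<bullet> (A *\<^sub>v y) = (\<Sum>i<k. x$i * (A *\<^sub>v y)$i)"
    using A x by (simp add: scalar_prod_def atLeast0LessThan)
  also have "\<dots> = (\<Sum>i<k. x$i * (\<Sum>j<k. A$$(i,j) * y$j))"
    using A y by (intro sum.cong refl) (simp add: scalar_prod_def atLeast0LessThan row_def)
  also have "\<dots> = (\<Sum>i<k. \<Sum>j<k. x$i * A$$(i,j) * y$j)"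
    by (simp add: sum_distrib_left mult.assoc)
  finally show ?thesis .
qed

lemma quad_expand:
  assumes A: "A \<in> carrier_mat k k" and s: "symm k A"
    and u: "u \<in> carrier_vec k" and w: "w \<in> carrier_vec k"
  shows "u \<bullet> (A *\<^sub>v u) = w \<bullet> (A *\<^sub>v w) + 2 * ((u - w) \<bullet> (A *\<^sub>v w)) + (u - w) \<bullet> (A *\<^sub>v (u - w))"
proof -
  have uw: "u - w \<in> carrier_vec k" using u w by simp
  have swap: "(\<Sum>i<k. \<Sum>j<k. A$$(i,j) * (u$i * w$j - w$i * u$j)) = 0"
  proof -
    have "(\<Sum>i<k. \<Sum>j<k. A$$(i,j) * (w$i * u$j)) = (\<Sum>j<k. \<Sum>i<k. A$$(i,j) * (w$i * u$j))"
      by (rule sum.swap)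
    also have "\<dots> = (\<Sum>i<k. \<Sum>j<k. A$$(i,j) * (u$i * w$j))"
      using s unfolding symm_def by (intro sum.cong refl) (simp add: mult_ac)
    finally show ?thesis by (simp add: right_diff_distrib sum_subtractf)
  qed
  have "w \<bullet> (A *\<^sub>v w) + 2 * ((u - w) \<bullet> (A *\<^sub>v w)) + (u - w) \<bullet> (A *\<^sub>v (u - w))
      = (\<Sum>i<k. \<Sum>j<k. w$i * A$$(i,j) * w$j + 2 * ((u$i - w$i) * A$$(i,j) * w$j)
             + (u$i - w$i) * A$$(i,j) * (u$j - w$j))"
  proof -
    have e2: "(u - w) \<bullet> (A *\<^sub>v w) = (\<Sum>i<k. \<Sum>j<k. (u$i - w$i) * A$$(i,j) * w$j)"
      unfolding bil_sum[OF A uw w] by (intro sum.cong refl) (use u w in simp)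
    have e3: "(u - w) \<bullet> (A *\<^sub>v (u - w)) = (\<Sum>i<k. \<Sum>j<k. (u$i - w$i) * A$$(i,j) * (u$j - w$j))"
      unfolding bil_sum[OF A uw uw] by (intro sum.cong refl) (use u w in simp)
    show ?thesis unfolding bil_sum[OF A w w] e2 e3
      by (simp add: sum.distrib sum_distrib_left)
  qed
  also have "\<dots> = (\<Sum>i<k. \<Sum>j<k. u$i * A$$(i,j) * u$j + A$$(i,j) * (u$i * w$j - w$i * u$j))"
    by (intro sum.cong refl) (simp add: algebra_simps)
  also have "\<dots> = u \<bullet> (A *\<^sub>v u)"
    using swap by (simp add: bil_sum[OF A u u] sum.distrib)
  finally show ?thesis by simp
qed

lemma pd_carrier: "pos_def_mat A \<Longrightarrow> A \<in> carrier_mat (dim_row A) (dim_row A)"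
  by (simp add: pos_def_mat_def)

lemma pd_inv:
  assumes pd: "pos_def_mat A" and A: "A \<in> carrier_mat k k"
  shows "A * minv A = 1\<^sub>m k \<and> minv A * A = 1\<^sub>m k \<and> minv A \<in> carrier_mat k k"
proof -
  have dk: "dim_row A = k" using A by simp
  have "Determinant.det A \<noteq> 0"
  proof
    assume "Determinant.det A = 0"
    then obtain v where v: "v \<in> carrier_vec k" "v \<noteq> 0\<^sub>v k" "A *\<^sub>v v = 0\<^sub>v k"
      using det_0_iff_vec_prod_zero[OF A] by blast
    have "\<forall>v\<in>carrier_vec (dim_row A). v \<noteq> 0\<^sub>v (dim_row A) \<longrightarrow> v \<bullet> (A *\<^sub>v v) > 0"
      using pd unfolding pos_def_mat_def by (rule conjunct2)
    hence "v \<bullet> (A *\<^sub>v v) > 0" using v(1,2) unfolding dk by blast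
    with v show False by simp
  qed
  from det_non_zero_imp_unit[OF A this, of "()"] have U: "A \<in> Units (ring_mat TYPE(real) k ())" .
  have "mat_inverse A \<noteq> None" using mat_inverse(1)[OF A, of "()"] U by blast
  then obtain B where "mat_inverse A = Some B" by auto
  with mat_inverse(2)[OF A this] show ?thesis by (simp add: minv_def)
qed

lemma symm_transpose: "A \<in> carrier_mat k k \<Longrightarrow> symm k A \<Longrightarrow> transpose_mat A = A"
  by (intro eq_matI) (auto simp: symm_def)

lemma symm_swap:
  assumes A: "A \<in> carrier_mat k k" and s: "symm k A" and x: "x \<in> carrier_vec k" and y: "y \<in> carrier_vec k"
  shows "(A *\<^sub>v x) \<bullet> y = x \<bullet> (A *\<^sub>v y)"
proof -
  have "(A *\<^sub>v x) \<bullet> y = y \<bullet> (A *\<^sub>v x)" by (rule comm_scalar_prod[OF _ y]) (use A x in simp)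
  also have "\<dots> = (transpose_mat A *\<^sub>v y) \<bullet> x" by (rule transpose_vec_mult_scalar[OF A x y, symmetric])
  also have "\<dots> = (A *\<^sub>v y) \<bullet> x" using symm_transpose[OF A s] by simp
  also have "\<dots> = x \<bullet> (A *\<^sub>v y)" by (rule comm_scalar_prod[OF _ x]) (use A y in simp)
  finally show ?thesis .
qed

lemma inv_swap:
  assumes pd: "pos_def_mat A" and A: "A \<in> carrier_mat k k" and s: "symm k A"
    and x: "x \<in> carrier_vec k" and y: "y \<in> carrier_vec k"
  shows "x \<bullet> (minv A *\<^sub>v y) = (minv A *\<^sub>v x) \<bullet> y"
proof -
  note I = pd_inv[OF pd A]
  have Bx: "minv A *\<^sub>v x \<in> carrier_vec k" "minv A *\<^sub>v y \<in> carrier_vec k" using I x y by auto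
  have "x = A *\<^sub>v (minv A *\<^sub>v x)"
    using I A x by (metis assoc_mult_mat_vec one_mult_mat_vec)
  hence "x \<bullet> (minv A *\<^sub>v y) = (A *\<^sub>v (minv A *\<^sub>v x)) \<bullet> (minv A *\<^sub>v y)" by simp
  also have "\<dots> = (minv A *\<^sub>v x) \<bullet> (A *\<^sub>v (minv A *\<^sub>v y))"
    by (rule symm_swap[OF A s Bx])
  also have "A *\<^sub>v (minv A *\<^sub>v y) = y"
    using I A y by (metis assoc_mult_mat_vec one_mult_mat_vec)
  finally show ?thesis .
qed

lemma A_inv_vec:
  assumes pd: "pos_def_mat A" and A: "A \<in> carrier_mat k k" and x: "x \<in> carrier_vec k"
  shows "A *\<^sub>v (minv A *\<^sub>v x) = x"
  using pd_inv[OF pd A] A x by (metis assoc_mult_mat_vec one_mult_mat_vec)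

lemma pd_pos:
  assumes pd: "pos_def_mat A" and A: "A \<in> carrier_mat k k" and e: "e \<in> carrier_vec k" and ne: "e \<noteq> 0\<^sub>v k"
  shows "e \<bullet> (A *\<^sub>v e) > 0"
proof -
  have dk: "dim_row A = k" using A by simp
  have "\<forall>v\<in>carrier_vec (dim_row A). v \<noteq> 0\<^sub>v (dim_row A) \<longrightarrow> v \<bullet> (A *\<^sub>v v) > 0"
    using pd unfolding pos_def_mat_def by (rule conjunct2)
  thus ?thesis using e ne unfolding dk by blast
qed

lemma pd_nonneg:
  assumes pd: "pos_def_mat A" and A: "A \<in> carrier_mat k k" and e: "e \<in> carrier_vec k"
  shows "e \<bullet> (A *\<^sub>v e) \<ge> 0"
  using pd_pos[OF pd A e] A e by (cases "e = 0\<^sub>v k") auto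


definition Lf :: "nat \<Rightarrow> real vec \<Rightarrow> (nat \<Rightarrow> real) \<Rightarrow> real" where
  "Lf n u y = (\<Sum>i<n-1. u$i * (y(i+2) - y(i+1)))"

lemma Lf_spacings: "u \<in> carrier_vec (n-1) \<Longrightarrow> u \<bullet> spacings n y = Lf n u y"
  by (simp add: scalar_prod_def spacings_def Lf_def atLeast0LessThan)

lemma abel:
  fixes c y :: "nat \<Rightarrow> real"
  shows "(\<Sum>j\<in>{1..Suc m}. c j * y j) = (\<Sum>j\<in>{1..Suc m}. c j) * y (Suc m)
     - (\<Sum>i<m. (\<Sum>j\<in>{1..i+1}. c j) * (y(i+2) - y(i+1)))"
proof (induction m)
  case 0
  then show ?case by (simp add: lessThan_0)
next
  case (Suc m)
  have "(\<Sum>j\<in>{1..Suc (Suc m)}. c j * y j) = (\<Sum>j\<in>{1..Suc m}. c j * y j) + c (Suc (Suc m)) * y (Suc (Suc m))"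
    by simp
  also have "\<dots> = (\<Sum>j\<in>{1..Suc m}. c j) * y (Suc m)
     - (\<Sum>i<m. (\<Sum>j\<in>{1..i+1}. c j) * (y(i+2) - y(i+1))) + c (Suc (Suc m)) * y (Suc (Suc m))"
    using Suc by simp
  also have "\<dots> = (\<Sum>j\<in>{1..Suc (Suc m)}. c j) * y (Suc (Suc m))
     - (\<Sum>i<Suc m. (\<Sum>j\<in>{1..i+1}. c j) * (y(i+2) - y(i+1)))"
    by (simp add: algebra_simps)
  finally show ?case .
qed

definition dd :: "nat \<Rightarrow> (nat \<Rightarrow> real) \<Rightarrow> real vec" where
  "dd n c = vec (n-1) (\<lambda>i. - (\<Sum>j\<in>{1..i+1}. c j))"

lemma dd_carrier[simp]: "dd n c \<in> carrier_vec (n-1)"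
  by (simp add: dd_def)

lemma linform_dd:
  assumes "n \<ge> 1" and "(\<Sum>j\<in>{1..n}. c j) = 0"
  shows "linform n c y = Lf n (dd n c) y"
proof -
  obtain m where n: "n = Suc m" using assms(1) by (cases n) auto
  have "linform n c y = - (\<Sum>i<m. (\<Sum>j\<in>{1..i+1}. c j) * (y(i+2) - y(i+1)))"
    using assms(2) unfolding linform_def n abel by simp
  also have "\<dots> = (\<Sum>i<m. (- (\<Sum>j\<in>{1..i+1}. c j)) * (y(i+2) - y(i+1)))"
    by (simp only: mult_minus_left sum_negf)
  also have "\<dots> = Lf n (dd n c) y"
    unfolding Lf_def dd_def n by (intro sum.cong) auto
  finally show ?thesis .
qed

definition cc :: "nat \<Rightarrow> real vec \<Rightarrow> nat \<Rightarrow> real" where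
  "cc n u j = (if 2 \<le> j \<and> j \<le> n then u$(j-2) else 0) - (if 1 \<le> j \<and> j+1 \<le> n then u$(j-1) else 0)"

lemma cc_partial: "i + 1 < n \<Longrightarrow> (\<Sum>j\<in>{1..i+1}. cc n u j) = - u$i"
proof (induction i)
  case 0
  then show ?case by (simp add: cc_def)
next
  case (Suc i)
  have "(\<Sum>j\<in>{1..Suc i+1}. cc n u j) = (\<Sum>j\<in>{1..i+1}. cc n u j) + cc n u (i+2)" by simp
  also have "\<dots> = - u$i + (u$i - u$(i+1))" using Suc by (simp add: cc_def)
  finally show ?case by simp
qed

lemma cc_sum: "n \<ge> 2 \<Longrightarrow> (\<Sum>j\<in>{1..n}. cc n u j) = 0"
proof -
  assume n: "n \<ge> 2"
  then obtain m where m: "n = Suc (Suc m)" by (metis add_2_eq_Suc le_Suc_ex)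
  have "(\<Sum>j\<in>{1..n}. cc n u j) = (\<Sum>j\<in>{1..m+1}. cc n u j) + cc n u n" by (simp add: m)
  also have "\<dots> = - u$m + u$m" using cc_partial[of m n u] by (simp add: m cc_def)
  finally show ?thesis by simp
qed

lemma linform_cc:
  assumes n: "n \<ge> 2"
  shows "linform n (cc n u) y = Lf n u y"
proof -
  have "linform n (cc n u) y = Lf n (dd n (cc n u)) y"
    using n cc_sum[OF n] by (intro linform_dd) auto
  also have "\<dots> = Lf n u y"
    unfolding Lf_def
  proof (intro sum.cong refl)
    fix i assume "i \<in> {..<n-1}"
    hence i: "i + 1 < n" by auto
    have "dd n (cc n u) $ i = - (\<Sum>j\<in>{1..i+1}. cc n u j)" using i by (simp add: dd_def)
    also have "\<dots> = u$i" by (simp only: cc_partial[OF i] minus_minus)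
    finally show "dd n (cc n u) $ i * (y (i + 2) - y (i + 1)) = u $ i * (y (i + 2) - y (i + 1))" by simp
  qed
  finally show ?thesis .
qed


lemma pmax_T:
  assumes j: "1 \<le> j" "j \<le> n" and b: "b \<ge> 0"
  shows "pmax j (compose {1..n} (\<lambda>x. a + b * x) \<omega>) = a + b * pmax j \<omega>"
proof -
  have "(\<lambda>i. compose {1..n} (\<lambda>x. a + b * x) \<omega> i) ` {1..j} = (\<lambda>x. a + b * x) ` (\<omega> ` {1..j})"
    using j by (force simp: compose_def)
  moreover have "mono (\<lambda>x. a + b * x)" using b by (intro monoI) (simp add: mult_left_mono)
  ultimately show ?thesis
    unfolding pmax_def using j mono_Max_commute[of "\<lambda>x. a + b * x" "\<omega> ` {1..j}"] by simp
qed

lemma pmax_meas: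
  assumes j: "j \<le> n" and K: "sets K = sets borel"
  shows "pmax j \<in> borel_measurable (PiM {1..n} (\<lambda>_. K))"
proof -
  have "(\<lambda>\<omega>. Max ((\<lambda>i. \<omega> i) ` {1..j})) \<in> borel_measurable (PiM {1..n} (\<lambda>_. K))"
  proof (rule borel_measurable_Max)
    fix i assume "i \<in> {1..j}"
    hence "i \<in> {1..n}" using j by auto
    hence "(\<lambda>\<omega>. \<omega> i) \<in> measurable (PiM {1..n} (\<lambda>_. K)) K" by (rule measurable_component_singleton)
    thus "(\<lambda>\<omega>. \<omega> i) \<in> borel_measurable (PiM {1..n} (\<lambda>_. K))"
      unfolding measurable_cong_sets[OF refl K[symmetric]] .
  qed simp
  thus ?thesis unfolding pmax_def[abs_def] .
qed

lemma pmax_in: "1 \<le> j \<Longrightarrow> \<exists>k\<in>{1..j}. pmax j \<omega> = \<omega> k"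
  unfolding pmax_def by (metis (no_types, lifting) Max_in atLeastAtMost_iff empty_iff finite_atLeastAtMost finite_imageI image_iff image_is_empty order_refl)

lemma pmax_mono: "1 \<le> i \<Longrightarrow> i \<le> j \<Longrightarrow> pmax i \<omega> \<le> pmax j \<omega>"
  unfolding pmax_def by (rule Max_mono) auto

locale pm_setting =
  fixes n :: nat and M :: "real measure"
  assumes n2: "n \<ge> 2" and rd: "real_distribution M" and fv: "integrable M (\<lambda>x. x\<^sup>2)"
begin

abbreviation "P \<equiv> PiM {1..n} (\<lambda>_. M)"
abbreviation "E \<equiv> integral\<^sup>L P"

lemma probM: "prob_space M" using rd by (simp add: real_distribution_def)
lemma setsM: "sets M = sets borel" using rd by (simp add: real_distribution_def real_distribution_axioms_def)

lemma probP: "prob_space P"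
  using probM by (intro prob_space_PiM) auto

lemma Ex_transfer:
  assumes g: "g \<in> borel_measurable (PiM {1..n} (\<lambda>_. borel))"
  shows "Ex n M a b g = E (\<lambda>\<omega>. g (compose {1..n} (\<lambda>x. a + b * x) \<omega>))"
proof -
  define h where "h = (\<lambda>x::real. a + b * x)"
  define N where "N = distr M borel h"
  have hm: "h \<in> borel_measurable borel" unfolding h_def by simp
  have hM: "h \<in> measurable M borel" unfolding measurable_cong_sets[OF setsM refl] by (rule hm)
  have sN: "sets N = sets borel" by (simp add: N_def)
  have pN: "prob_space N" unfolding N_def using probM hM by (intro prob_space.prob_space_distr) auto
  have hMN: "h \<in> measurable M N" unfolding measurable_cong_sets[OF refl sN] by (rule hM)
  have "distr P (PiM {1..n} (\<lambda>_. N)) (compose {1..n} h) = PiM {1..n} (\<lambda>_. distr M N h)"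
    by (rule distr_PiM_finite_prob_space') (use probM pN hMN in auto)
  also have "distr M N h = N" unfolding N_def by (rule distr_cong) (simp_all add: sN[unfolded N_def])
  finally have law: "sample_law n M a b = distr P (PiM {1..n} (\<lambda>_. N)) (compose {1..n} h)"
    by (simp add: sample_law_def N_def h_def)
  have Tm: "compose {1..n} h \<in> measurable P (PiM {1..n} (\<lambda>_. N))"
    unfolding compose_def
  proof (rule measurable_restrict)
    fix i :: nat assume "i \<in> {1..n}"
    hence "(\<lambda>\<omega>. \<omega> i) \<in> measurable P M" by (rule measurable_component_singleton)
    thus "(\<lambda>\<omega>. h (\<omega> i)) \<in> measurable P N" using hMN by (rule measurable_compose)
  qed
  have sPN: "sets (PiM {1..n} (\<lambda>_. N)) = sets (PiM {1..n} (\<lambda>_. borel::real measure))"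
    by (intro sets_PiM_cong) (simp_all add: sN)
  have gN: "g \<in> borel_measurable (PiM {1..n} (\<lambda>_. N))"
    unfolding measurable_cong_sets[OF sPN refl] by (rule g)
  have "Ex n M a b g = integral\<^sup>L (distr P (PiM {1..n} (\<lambda>_. N)) (compose {1..n} h)) g"
    by (simp add: Ex_def law)
  also have "\<dots> = E (\<lambda>\<omega>. g (compose {1..n} h \<omega>))" by (rule integral_distr[OF Tm gN])
  finally show ?thesis by (simp add: h_def)
qed

lemma int_coord: "k \<in> {1..n} \<Longrightarrow> integrable P (\<lambda>\<omega>. (\<omega> k)\<^sup>2)"
proof -
  assume k: "k \<in> {1..n}"
  have c: "(\<lambda>\<omega>. \<omega> k) \<in> measurable P M" using k by (rule measurable_component_singleton)
  have d: "distr P M (\<lambda>\<omega>. \<omega> k) = M" using probM k by (intro distr_PiM_component) auto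
  have f: "(\<lambda>x::real. x\<^sup>2) \<in> borel_measurable M" unfolding measurable_cong_sets[OF setsM refl] by simp
  show ?thesis using integrable_distr_eq[OF c f] d fv by simp
qed

definition B :: "(nat \<Rightarrow> real) \<Rightarrow> real" where
  "B \<omega> = 1 + (\<Sum>k\<in>{1..n}. (\<omega> k)\<^sup>2)"

lemma intP_const: "integrable P (\<lambda>_. c::real)"
proof -
  interpret prob_space P by (rule probP)
  show ?thesis by (rule integrable_const)
qed

lemma EP_const: "E (\<lambda>_. c::real) = c"
proof -
  interpret prob_space P by (rule probP)
  show ?thesis using prob_space by simp
qed

lemma int_B: "integrable P B"
  unfolding B_def[abs_def]
  using int_coord intP_const by (intro Bochner_Integration.integrable_add integrable_sum) auto

lemma coord_le_B: "k \<in> {1..n} \<Longrightarrow> ((\<omega>::nat\<Rightarrow>real) k)\<^sup>2 \<le> (\<Sum>k\<in>{1..n}. (\<omega> k)\<^sup>2)"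
  by (rule member_le_sum[of k "{1..n}" "\<lambda>k. (\<omega> k)\<^sup>2"]) auto

lemma abs_le_sq: "\<bar>x\<bar> \<le> 1 + x\<^sup>2" for x :: real
proof (cases "\<bar>x\<bar> \<le> 1")
  case True
  then show ?thesis by (simp add: add_increasing2)
next
  case False
  hence "\<bar>x\<bar> * 1 \<le> \<bar>x\<bar> * \<bar>x\<bar>" by (intro mult_left_mono) auto
  thus ?thesis by (simp add: power2_eq_square abs_mult[symmetric])
qed

lemma abs_mult_le: "\<bar>x * y\<bar> \<le> max (x\<^sup>2) (y\<^sup>2)" for x y :: real
proof (cases "\<bar>x\<bar> \<le> \<bar>y\<bar>")
  case True
  hence "\<bar>x\<bar> * \<bar>y\<bar> \<le> \<bar>y\<bar> * \<bar>y\<bar>" by (intro mult_right_mono) auto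
  thus ?thesis by (simp add: abs_mult power2_eq_square)
next
  case False
  hence "\<bar>x\<bar> * \<bar>y\<bar> \<le> \<bar>x\<bar> * \<bar>x\<bar>" by (intro mult_left_mono) auto
  thus ?thesis by (simp add: abs_mult power2_eq_square)
qed

lemma pmax_measP: "j \<le> n \<Longrightarrow> pmax j \<in> borel_measurable P"
  using pmax_meas setsM by blast

lemma int_pmax: assumes j: "j \<in> {1..n}" shows "integrable P (pmax j)"
proof (rule Bochner_Integration.integrable_bound[OF int_B])
  show "pmax j \<in> borel_measurable P" using j by (intro pmax_measP) auto
  show "AE \<omega> in P. norm (pmax j \<omega>) \<le> norm (B \<omega>)"
  proof (intro AE_I2)
    fix \<omega>
    obtain k where k: "k \<in> {1..j}" "pmax j \<omega> = \<omega> k" using pmax_in[of j \<omega>] j by auto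
    have "\<bar>\<omega> k\<bar> \<le> 1 + (\<omega> k)\<^sup>2"
      by (rule abs_le_sq)
    also have "\<dots> \<le> B \<omega>" unfolding B_def using coord_le_B[of k] k j by auto
    finally show "norm (pmax j \<omega>) \<le> norm (B \<omega>)" using k(2) by simp
  qed
qed

lemma int_pmax2: assumes i: "i \<in> {1..n}" and j: "j \<in> {1..n}"
  shows "integrable P (\<lambda>\<omega>. pmax i \<omega> * pmax j \<omega>)"
proof (rule Bochner_Integration.integrable_bound[OF int_B])
  show "(\<lambda>\<omega>. pmax i \<omega> * pmax j \<omega>) \<in> borel_measurable P"
    using i j pmax_measP by (intro borel_measurable_times) auto
  show "AE \<omega> in P. norm (pmax i \<omega> * pmax j \<omega>) \<le> norm (B \<omega>)"
  proof (intro AE_I2)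
    fix \<omega>
    obtain k where k: "k \<in> {1..i}" "pmax i \<omega> = \<omega> k" using pmax_in[of i \<omega>] i by auto
    obtain l where l: "l \<in> {1..j}" "pmax j \<omega> = \<omega> l" using pmax_in[of j \<omega>] j by auto
    have "\<bar>\<omega> k * \<omega> l\<bar> \<le> max ((\<omega> k)\<^sup>2) ((\<omega> l)\<^sup>2)" by (rule abs_mult_le)
    also have "\<dots> \<le> B \<omega>" unfolding B_def using coord_le_B[of k \<omega>] coord_le_B[of l \<omega>] k l i j by auto
    finally show "norm (pmax i \<omega> * pmax j \<omega>) \<le> norm (B \<omega>)" using k(2) l(2) by simp
  qed
qed


lemma int_Zs: "i < n - 1 \<Longrightarrow> integrable P (Zs i)"
  unfolding Zs_def[abs_def] by (intro Bochner_Integration.integrable_diff int_pmax) auto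

lemma int_ZZ: assumes "i < n - 1" "j < n - 1" shows "integrable P (\<lambda>\<omega>. Zs i \<omega> * Zs j \<omega>)"
proof -
  have e: "(\<lambda>\<omega>. Zs i \<omega> * Zs j \<omega>) = (\<lambda>\<omega>. pmax (i+2) \<omega> * pmax (j+2) \<omega> - pmax (i+2) \<omega> * pmax (j+1) \<omega>
     - pmax (i+1) \<omega> * pmax (j+2) \<omega> + pmax (i+1) \<omega> * pmax (j+1) \<omega>)"
    by (rule ext) (simp add: Zs_def algebra_simps)
  show ?thesis unfolding e using assms
    by (intro Bochner_Integration.integrable_add Bochner_Integration.integrable_diff int_pmax2) auto
qed

lemma Lf_pm: "Lf n u (\<lambda>j. pmax j \<omega>) = (\<Sum>i<n-1. u$i * Zs i \<omega>)"
  by (simp add: Lf_def Zs_def)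

lemma dim_mvec[simp]: "mvec n M \<in> carrier_vec (n-1)" by (simp add: mvec_def)
lemma dim_vec_mvec[simp]: "dim_vec (mvec n M) = n - 1" by (simp add: mvec_def)
lemma dim_Dmat[simp]: "Dmat n M \<in> carrier_mat (n-1) (n-1)" by (simp add: Dmat_def)
lemma dim_Smat[simp]: "Smat n M \<in> carrier_mat (n-1) (n-1)" by (simp add: Smat_def)

lemma EL: assumes u: "u \<in> carrier_vec (n-1)"
  shows "E (\<lambda>\<omega>. Lf n u (\<lambda>j. pmax j \<omega>)) = u \<bullet> mvec n M"
proof -
  have "E (\<lambda>\<omega>. Lf n u (\<lambda>j. pmax j \<omega>)) = (\<Sum>i<n-1. E (\<lambda>\<omega>. u$i * Zs i \<omega>))"
    unfolding Lf_pm using int_Zs by (intro Bochner_Integration.integral_sum) auto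
  also have "\<dots> = (\<Sum>i<n-1. u$i * E (Zs i))" by simp
  also have "\<dots> = u \<bullet> mvec n M"
    by (simp add: scalar_prod_def mvec_def atLeast0LessThan)
  finally show ?thesis .
qed

lemma int_L: "integrable P (\<lambda>\<omega>. Lf n u (\<lambda>j. pmax j \<omega>))"
  unfolding Lf_pm using int_Zs by (intro Bochner_Integration.integrable_sum Bochner_Integration.integrable_mult_right) auto

lemma int_L2: "integrable P (\<lambda>\<omega>. (\<Sum>i<n-1. \<Sum>j<n-1. u$i * u$j * (Zs i \<omega> * Zs j \<omega>)))"
  using int_ZZ by (intro Bochner_Integration.integrable_sum Bochner_Integration.integrable_mult_right) auto

lemma EQ: assumes u: "u \<in> carrier_vec (n-1)"
  shows "E (\<lambda>\<omega>. (s * Lf n u (\<lambda>j. pmax j \<omega>) - t)\<^sup>2)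
     = s\<^sup>2 * (u \<bullet> (Dmat n M *\<^sub>v u)) - 2 * s * t * (u \<bullet> mvec n M) + t\<^sup>2"
proof -
  define L where "L = (\<lambda>\<omega>. Lf n u (\<lambda>j. pmax j \<omega>))"
  have sq: "(L \<omega>)\<^sup>2 = (\<Sum>i<n-1. \<Sum>j<n-1. u$i * u$j * (Zs i \<omega> * Zs j \<omega>))" for \<omega>
    unfolding L_def Lf_pm power2_eq_square sum_product by (simp add: mult_ac)
  have e: "(\<lambda>\<omega>. (s * L \<omega> - t)\<^sup>2) = (\<lambda>\<omega>. s\<^sup>2 * (L \<omega>)\<^sup>2 - 2 * s * t * L \<omega> + t\<^sup>2)"
    by (rule ext) (simp add: power2_eq_square algebra_simps)
  have iL: "integrable P L" unfolding L_def by (rule int_L)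
  have iL2: "integrable P (\<lambda>\<omega>. (L \<omega>)\<^sup>2)" unfolding sq by (rule int_L2)
  have EL2: "E (\<lambda>\<omega>. (L \<omega>)\<^sup>2) = u \<bullet> (Dmat n M *\<^sub>v u)"
  proof -
    have "E (\<lambda>\<omega>. (L \<omega>)\<^sup>2) = (\<Sum>i<n-1. \<Sum>j<n-1. E (\<lambda>\<omega>. u$i * u$j * (Zs i \<omega> * Zs j \<omega>)))"
      unfolding sq using int_ZZ
      by (subst Bochner_Integration.integral_sum,
          force intro!: Bochner_Integration.integrable_sum Bochner_Integration.integrable_mult_right)
         (intro sum.cong refl Bochner_Integration.integral_sum,
          auto intro!: Bochner_Integration.integrable_mult_right)
    also have "\<dots> = (\<Sum>i<n-1. \<Sum>j<n-1. u$i * Dmat n M $$ (i,j) * u$j)"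
      by (intro sum.cong refl) (simp only: integral_mult_right_zero, simp add: Dmat_def)
    also have "\<dots> = u \<bullet> (Dmat n M *\<^sub>v u)" using bil_sum[OF dim_Dmat u u] by simp
    finally show ?thesis .
  qed
  have "E (\<lambda>\<omega>. (s * L \<omega> - t)\<^sup>2) = E (\<lambda>\<omega>. s\<^sup>2 * (L \<omega>)\<^sup>2 - 2 * s * t * L \<omega>) + E (\<lambda>_. t\<^sup>2)"
    unfolding e using iL iL2 intP_const
    by (intro Bochner_Integration.integral_add Bochner_Integration.integrable_diff Bochner_Integration.integrable_mult_right) auto
  also have "\<dots> = s\<^sup>2 * E (\<lambda>\<omega>. (L \<omega>)\<^sup>2) - 2 * s * t * E L + t\<^sup>2"
    unfolding EP_const using iL iL2 by (subst Bochner_Integration.integral_diff) auto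
  finally show ?thesis unfolding EL2 using EL[OF u] by (simp add: L_def)
qed


lemma Zs_meas: "i < n - 1 \<Longrightarrow> Zs i \<in> borel_measurable (PiM {1..n} (\<lambda>_. borel))"
  unfolding Zs_def[abs_def] by (intro borel_measurable_diff pmax_meas) auto

lemma L_meas: "(\<lambda>\<omega>. Lf n u (\<lambda>j. pmax j \<omega>)) \<in> borel_measurable (PiM {1..n} (\<lambda>_. borel))"
  unfolding Lf_pm using Zs_meas by (intro borel_measurable_sum borel_measurable_times) auto

lemma linest_meas: "linest n c \<in> borel_measurable (PiM {1..n} (\<lambda>_. borel))"
  unfolding linest_def[abs_def] linform_def
  using pmax_meas by (intro borel_measurable_sum borel_measurable_times) auto

lemma L_T: assumes b: "b \<ge> 0"
  shows "Lf n u (\<lambda>j. pmax j (compose {1..n} (\<lambda>x. a + b * x) \<omega>)) = b * Lf n u (\<lambda>j. pmax j \<omega>)"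
  unfolding Lf_def sum_distrib_left
proof (intro sum.cong refl)
  fix i assume "i \<in> {..<n-1}"
  hence i: "1 \<le> i + 1" "i + 1 \<le> n" "1 \<le> i + 2" "i + 2 \<le> n" by auto
  show "u $ i * (pmax (i + 2) (compose {1..n} (\<lambda>x. a + b * x) \<omega>) - pmax (i + 1) (compose {1..n} (\<lambda>x. a + b * x) \<omega>))
     = b * (u $ i * (pmax (i + 2) \<omega> - pmax (i + 1) \<omega>))"
    unfolding pmax_T[OF i(1,2) b] pmax_T[OF i(3,4) b] by (simp add: algebra_simps)
qed

lemma linest_T: assumes b: "b \<ge> 0"
  shows "linest n c (compose {1..n} (\<lambda>x. a + b * x) \<omega>) = a * (\<Sum>j\<in>{1..n}. c j) + b * linest n c \<omega>"
proof -
  have "\<And>j. j \<in> {1..n} \<Longrightarrow> c j * pmax j (compose {1..n} (\<lambda>x. a + b * x) \<omega>) = a * c j + b * (c j * pmax j \<omega>)"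
    using pmax_T[OF _ _ b] by (simp add: algebra_simps)
  hence "linest n c (compose {1..n} (\<lambda>x. a + b * x) \<omega>) = (\<Sum>j\<in>{1..n}. a * c j + b * (c j * pmax j \<omega>))"
    unfolding linest_def linform_def by (intro sum.cong refl) auto
  thus ?thesis unfolding sum.distrib sum_distrib_left[symmetric] linest_def linform_def .
qed

lemma int_linest: "integrable P (linest n c)"
  unfolding linest_def[abs_def] linform_def
  using int_pmax by (intro Bochner_Integration.integrable_sum Bochner_Integration.integrable_mult_right) auto

lemma E1: assumes b: "b \<ge> 0"
  shows "Ex n M a b (linest n c) = a * (\<Sum>j\<in>{1..n}. c j) + b * E (linest n c)"
proof -
  have "Ex n M a b (linest n c) = E (\<lambda>\<omega>. a * (\<Sum>j\<in>{1..n}. c j) + b * linest n c \<omega>)"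
    unfolding Ex_transfer[OF linest_meas] linest_T[OF b] ..
  also have "\<dots> = E (\<lambda>_. a * (\<Sum>j\<in>{1..n}. c j)) + E (\<lambda>\<omega>. b * linest n c \<omega>)"
    using intP_const int_linest by (intro Bochner_Integration.integral_add Bochner_Integration.integrable_mult_right) auto
  finally show ?thesis unfolding EP_const by simp
qed

lemma V1: assumes b: "b \<ge> 0" and u: "u \<in> carrier_vec (n-1)"
  shows "Ex n M a b (\<lambda>\<omega>. Lf n u (\<lambda>j. pmax j \<omega>)) = b * (u \<bullet> mvec n M)"
  unfolding Ex_transfer[OF L_meas] L_T[OF b] integral_mult_right_zero EL[OF u] ..

lemma V_gen: assumes b: "b \<ge> 0" and u: "u \<in> carrier_vec (n-1)"
  shows "Ex n M a b (\<lambda>\<omega>. (Lf n u (\<lambda>j. pmax j \<omega>) - t)\<^sup>2)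
     = b\<^sup>2 * (u \<bullet> (Dmat n M *\<^sub>v u)) - 2 * b * t * (u \<bullet> mvec n M) + t\<^sup>2"
proof -
  have m: "(\<lambda>\<omega>. (Lf n u (\<lambda>j. pmax j \<omega>) - t)\<^sup>2) \<in> borel_measurable (PiM {1..n} (\<lambda>_. borel))"
    using L_meas by measurable
  show ?thesis unfolding Ex_transfer[OF m] L_T[OF b] by (rule EQ[OF u])
qed

lemma V2: assumes b: "b \<ge> 0" and u: "u \<in> carrier_vec (n-1)"
  shows "Var n M a b (\<lambda>\<omega>. Lf n u (\<lambda>j. pmax j \<omega>)) = b\<^sup>2 * (u \<bullet> (Dmat n M *\<^sub>v u) - (u \<bullet> mvec n M)\<^sup>2)"
  unfolding Var_def V1[OF b u] V_gen[OF b u] by (simp add: power2_eq_square algebra_simps)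

lemma V3: assumes b: "b \<ge> 0" and u: "u \<in> carrier_vec (n-1)"
  shows "MSE2 n M a b (\<lambda>\<omega>. Lf n u (\<lambda>j. pmax j \<omega>)) = b\<^sup>2 * (u \<bullet> (Dmat n M *\<^sub>v u) - 2 * (u \<bullet> mvec n M) + 1)"
  unfolding MSE2_def V_gen[OF b u] by (simp add: power2_eq_square algebra_simps)

lemma S_D: assumes u: "u \<in> carrier_vec (n-1)"
  shows "u \<bullet> (Smat n M *\<^sub>v u) = u \<bullet> (Dmat n M *\<^sub>v u) - (u \<bullet> mvec n M)\<^sup>2"
proof -
  have "u \<bullet> (Smat n M *\<^sub>v u) = (\<Sum>i<n-1. \<Sum>j<n-1. u$i * Dmat n M $$ (i,j) * u$j - (u$i * mvec n M $ i) * (u$j * mvec n M $ j))"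
    unfolding bil_sum[OF dim_Smat u u]
    by (intro sum.cong refl) (simp add: Smat_def Dmat_def mvec_def algebra_simps)
  also have "\<dots> = u \<bullet> (Dmat n M *\<^sub>v u) - (\<Sum>i<n-1. u$i * mvec n M $ i) * (\<Sum>j<n-1. u$j * mvec n M $ j)"
    unfolding bil_sum[OF dim_Dmat u u] sum_product by (simp add: sum_subtractf)
  also have "(\<Sum>i<n-1. u$i * mvec n M $ i) = u \<bullet> mvec n M"
    by (simp add: scalar_prod_def atLeast0LessThan)
  finally show ?thesis by (simp add: power2_eq_square)
qed


lemma Lf_smult: "u \<in> carrier_vec (n-1) \<Longrightarrow> Lf n (r \<cdot>\<^sub>v u) y = r * Lf n u y"
  unfolding Lf_def sum_distrib_left by (intro sum.cong refl) auto

lemma unb_iff: "unbiased2 n M c \<longleftrightarrow> (\<Sum>j\<in>{1..n}. c j) = 0 \<and> E (linest n c) = 1"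
proof
  assume u: "unbiased2 n M c"
  have "Ex n M 0 1 (linest n c) = 1" "Ex n M 1 1 (linest n c) = 1"
    using u unfolding unbiased2_def by auto
  moreover have "Ex n M 0 1 (linest n c) = 0 * (\<Sum>j\<in>{1..n}. c j) + 1 * E (linest n c)" by (rule E1) simp
  moreover have "Ex n M 1 1 (linest n c) = 1 * (\<Sum>j\<in>{1..n}. c j) + 1 * E (linest n c)" by (rule E1) simp
  ultimately show "(\<Sum>j\<in>{1..n}. c j) = 0 \<and> E (linest n c) = 1" by simp
next
  assume "(\<Sum>j\<in>{1..n}. c j) = 0 \<and> E (linest n c) = 1"
  thus "unbiased2 n M c" unfolding unbiased2_def using E1 by simp
qed

lemma inv_iff: "invariant2 n c \<longleftrightarrow> (\<Sum>j\<in>{1..n}. c j) = 0"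
proof
  assume "invariant2 n c"
  hence "\<forall>y a b. b > 0 \<longrightarrow> linform n c (\<lambda>j. b * y j + a) = b * linform n c y" unfolding invariant2_def .
  note h = this[rule_format]
  have "linform n c (\<lambda>j. 1 * (\<lambda>j. 0) j + 1) = 1 * linform n c (\<lambda>j. 0)"
    by (rule h[where b=1 and y="\<lambda>j. 0" and a=1]) simp
  thus "(\<Sum>j\<in>{1..n}. c j) = 0" by (simp add: linform_def)
next
  assume s: "(\<Sum>j\<in>{1..n}. c j) = 0"
  show "invariant2 n c" unfolding invariant2_def
  proof (intro allI impI)
    fix y a and b :: real
    have "linform n c (\<lambda>j. b * y j + a) = b * linform n c y + a * (\<Sum>j\<in>{1..n}. c j)"
      unfolding linform_def by (simp add: algebra_simps sum.distrib sum_distrib_left)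
    thus "linform n c (\<lambda>j. b * y j + a) = b * linform n c y" using s by simp
  qed
qed

lemma linest_dd: "(\<Sum>j\<in>{1..n}. c j) = 0 \<Longrightarrow> linest n c = (\<lambda>\<omega>. Lf n (dd n c) (\<lambda>j. pmax j \<omega>))"
  using n2 by (intro ext) (simp add: linest_def linform_dd)

lemma linest_cc: "linest n (cc n u) = (\<lambda>\<omega>. Lf n u (\<lambda>j. pmax j \<omega>))"
  using n2 by (intro ext) (simp add: linest_def linform_cc)

lemma symS: "symm (n-1) (Smat n M)" unfolding symm_def Smat_def by (simp add: mult.commute)
lemma symD: "symm (n-1) (Dmat n M)" unfolding symm_def Dmat_def by (simp add: mult.commute)

lemma Zs_nonneg: "i < n - 1 \<Longrightarrow> Zs i \<omega> \<ge> 0"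
  unfolding Zs_def using pmax_mono[of "i+1" "i+2" \<omega>] by simp

lemma ifm1: "(if Q then (1::real) else 0) * x = (if Q then x else 0)" by simp
lemma ifm2: "x * (if Q then (1::real) else 0) = (if Q then x else 0)" by simp

lemma m_nonzero: assumes Dpd: "pos_def_mat (Dmat n M)" shows "mvec n M \<noteq> 0\<^sub>v (n-1)"
proof
  assume m0: "mvec n M = 0\<^sub>v (n-1)"
  have k: "0 < n - 1" using n2 by simp
  have "E (Zs 0) = 0" using arg_cong[OF m0, of "\<lambda>v::real vec. v $ 0"] k by (simp add: mvec_def)
  hence "AE \<omega> in P. Zs 0 \<omega> = 0"
    using integral_nonneg_eq_0_iff_AE[OF int_Zs[OF k]] Zs_nonneg[OF k] by simp
  hence "AE \<omega> in P. Zs 0 \<omega> * Zs 0 \<omega> = 0" by eventually_elim simp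
  hence "E (\<lambda>\<omega>. Zs 0 \<omega> * Zs 0 \<omega>) = E (\<lambda>_. 0)"
    using int_ZZ[OF k k] by (intro integral_cong_AE) auto
  hence D00: "Dmat n M $$ (0,0) = 0" using k by (simp add: Dmat_def)
  define e :: "real vec" where "e = unit_vec (n-1) 0"
  have e: "e \<in> carrier_vec (n-1)" "e \<noteq> 0\<^sub>v (n-1)"
    using k by (auto simp: e_def)
  have "e \<bullet> (Dmat n M *\<^sub>v e) = Dmat n M $$ (0,0)"
    unfolding bil_sum[OF dim_Dmat e(1) e(1)] using k by (simp add: e_def unit_vec_def ifm1 ifm2)
  with D00 pd_pos[OF Dpd dim_Dmat e] show False by simp
qed

end


locale pm_full = pm_setting +
  assumes Spd: "pos_def_mat (Smat n M)" and Dpd: "pos_def_mat (Dmat n M)"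
begin

definition "wS = minv (Smat n M) *\<^sub>v mvec n M"
definition "q = mvec n M \<bullet> wS"
definition "dS = (1/q) \<cdot>\<^sub>v wS"
definition "dD = minv (Dmat n M) *\<^sub>v mvec n M"

lemma invS: "minv (Smat n M) \<in> carrier_mat (n-1) (n-1)" using pd_inv[OF Spd dim_Smat] by blast
lemma invD: "minv (Dmat n M) \<in> carrier_mat (n-1) (n-1)" using pd_inv[OF Dpd dim_Dmat] by blast

lemma wS_c: "wS \<in> carrier_vec (n-1)" unfolding wS_def by (rule mult_mat_vec_carrier[OF invS dim_mvec])
lemma dS_c: "dS \<in> carrier_vec (n-1)" unfolding dS_def using wS_c by (simp only: smult_carrier_vec)
lemma dD_c: "dD \<in> carrier_vec (n-1)" unfolding dD_def by (rule mult_mat_vec_carrier[OF invD dim_mvec])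

lemma S_wS: "Smat n M *\<^sub>v wS = mvec n M"
  unfolding wS_def by (rule A_inv_vec[OF Spd dim_Smat dim_mvec])
lemma D_dD: "Dmat n M *\<^sub>v dD = mvec n M"
  unfolding dD_def by (rule A_inv_vec[OF Dpd dim_Dmat dim_mvec])

lemma q_pos: "q > 0"
proof -
  have "wS \<noteq> 0\<^sub>v (n-1)"
  proof
    assume "wS = 0\<^sub>v (n-1)"
    moreover have "Smat n M *\<^sub>v 0\<^sub>v (n-1) = 0\<^sub>v (n-1)"
      by (rule eq_vecI) (simp_all add: Smat_def scalar_prod_def)
    ultimately have "mvec n M = 0\<^sub>v (n-1)" using S_wS by simp
    thus False using m_nonzero[OF Dpd] by simp
  qed
  hence "wS \<bullet> (Smat n M *\<^sub>v wS) > 0" by (intro pd_pos[OF Spd dim_Smat wS_c])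
  moreover have "q = wS \<bullet> (Smat n M *\<^sub>v wS)"
    unfolding q_def S_wS by (rule comm_scalar_prod[OF dim_mvec wS_c])
  ultimately show ?thesis by simp
qed

lemma wS_m: "wS \<bullet> mvec n M = q"
  unfolding q_def by (rule comm_scalar_prod[OF wS_c dim_mvec])

lemma dS_m: "dS \<bullet> mvec n M = 1"
  unfolding dS_def smult_scalar_prod_distrib[OF wS_c dim_mvec] wS_m using q_pos by simp

lemma S_dS: "Smat n M *\<^sub>v dS = (1/q) \<cdot>\<^sub>v mvec n M"
  unfolding dS_def by (simp add: mult_mat_vec[OF dim_Smat wS_c] S_wS)

lemma dS_S_dS: "dS \<bullet> (Smat n M *\<^sub>v dS) = 1/q"
  unfolding S_dS scalar_prod_smult_distrib[OF dS_c dim_mvec] dS_m by simp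

lemma blue_min: assumes u: "u \<in> carrier_vec (n-1)" and um: "u \<bullet> mvec n M = 1"
  shows "u \<bullet> (Smat n M *\<^sub>v u) = dS \<bullet> (Smat n M *\<^sub>v dS) + (u - dS) \<bullet> (Smat n M *\<^sub>v (u - dS))"
proof -
  have "(u - dS) \<bullet> (Smat n M *\<^sub>v dS) = (1/q) * ((u - dS) \<bullet> mvec n M)"
    unfolding S_dS by (rule scalar_prod_smult_distrib[OF minus_carrier_vec[OF u dS_c] dim_mvec])
  also have "(u - dS) \<bullet> mvec n M = 0"
    using minus_scalar_prod_distrib[OF u dS_c dim_mvec] um dS_m by simp
  finally have z: "(u - dS) \<bullet> (Smat n M *\<^sub>v dS) = 0" by simp
  show ?thesis using quad_expand[OF dim_Smat symS u dS_c] z by simp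
qed

lemma dD_m: "dD \<bullet> mvec n M = mvec n M \<bullet> (minv (Dmat n M) *\<^sub>v mvec n M)"
  unfolding dD_def by (rule comm_scalar_prod[OF mult_mat_vec_carrier[OF invD dim_mvec] dim_mvec])

lemma blie_min: assumes u: "u \<in> carrier_vec (n-1)"
  shows "u \<bullet> (Dmat n M *\<^sub>v u) - 2 * (u \<bullet> mvec n M)
     = - (dD \<bullet> mvec n M) + (u - dD) \<bullet> (Dmat n M *\<^sub>v (u - dD))"
proof -
  have "(u - dD) \<bullet> mvec n M = u \<bullet> mvec n M - dD \<bullet> mvec n M"
    by (rule minus_scalar_prod_distrib[OF u dD_c dim_mvec])
  thus ?thesis using quad_expand[OF dim_Dmat symD u dD_c] unfolding D_dD by simp
qed

lemma form_S: "(mvec n M \<bullet> (minv (Smat n M) *\<^sub>v spacings n y)) / q = Lf n dS y"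
proof -
  have sp: "spacings n y \<in> carrier_vec (n-1)" by (simp add: spacings_def)
  have "mvec n M \<bullet> (minv (Smat n M) *\<^sub>v spacings n y) = wS \<bullet> spacings n y"
    unfolding wS_def by (rule inv_swap[OF Spd dim_Smat symS dim_mvec sp])
  also have "\<dots> = Lf n wS y" by (rule Lf_spacings[OF wS_c])
  finally show ?thesis unfolding dS_def Lf_smult[OF wS_c] by simp
qed

lemma form_D: "mvec n M \<bullet> (minv (Dmat n M) *\<^sub>v spacings n y) = Lf n dD y"
proof -
  have sp: "spacings n y \<in> carrier_vec (n-1)" by (simp add: spacings_def)
  have "mvec n M \<bullet> (minv (Dmat n M) *\<^sub>v spacings n y) = dD \<bullet> spacings n y"
    unfolding dD_def by (rule inv_swap[OF Dpd dim_Dmat symD dim_mvec sp])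
  also have "\<dots> = Lf n dD y" by (rule Lf_spacings[OF dD_c])
  finally show ?thesis .
qed

lemma VarS: assumes "b \<ge> 0" "u \<in> carrier_vec (n-1)"
  shows "Var n M a b (\<lambda>\<omega>. Lf n u (\<lambda>j. pmax j \<omega>)) = b\<^sup>2 * (u \<bullet> (Smat n M *\<^sub>v u))"
  unfolding V2[OF assms] S_D[OF assms(2)] ..

lemma pd_zero: assumes pd: "pos_def_mat A" and A: "A \<in> carrier_mat (n-1) (n-1)"
  and e: "e \<in> carrier_vec (n-1)" and le: "e \<bullet> (A *\<^sub>v e) \<le> 0" shows "e = 0\<^sub>v (n-1)"
  using pd_pos[OF pd A e] le by fastforce

end


lemma vec_eq_diff: fixes u w :: "real vec" assumes "u - w = 0\<^sub>v k" "u \<in> carrier_vec k" "w \<in> carrier_vec k" shows "u = w"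
proof (rule eq_vecI)
  show "dim_vec u = dim_vec w" using assms by simp
  fix i assume "i < dim_vec w"
  hence "(u - w) $ i = 0" "i < k" using assms by auto
  moreover have "(u - w) $ i = u $ i - w $ i" using \<open>i < dim_vec w\<close> by simp
  ultimately show "u $ i = w $ i" by simp
qed

context pm_full
begin

lemma unb_facts: assumes "unbiased2 n M c"
  shows "linest n c = (\<lambda>\<omega>. Lf n (dd n c) (\<lambda>j. pmax j \<omega>))" "dd n c \<bullet> mvec n M = 1"
proof -
  have s: "(\<Sum>j\<in>{1..n}. c j) = 0" and e: "E (linest n c) = 1" using assms unb_iff by auto
  show l: "linest n c = (\<lambda>\<omega>. Lf n (dd n c) (\<lambda>j. pmax j \<omega>))" by (rule linest_dd[OF s])
  show "dd n c \<bullet> mvec n M = 1" using e unfolding l EL[OF dd_carrier] .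
qed

lemma unb_cS: "unbiased2 n M (cc n dS)"
  unfolding unb_iff linest_cc EL[OF dS_c] dS_m using cc_sum[OF n2] by simp

lemma var_cS: assumes b: "b > 0" shows "Var n M a b (linest n (cc n dS)) = b\<^sup>2 * (1/q)"
proof -
  have "Var n M a b (\<lambda>\<omega>. Lf n dS (\<lambda>j. pmax j \<omega>)) = b\<^sup>2 * (dS \<bullet> (Smat n M *\<^sub>v dS))"
    by (rule VarS[OF _ dS_c]) (use b in simp)
  thus ?thesis unfolding linest_cc dS_S_dS .
qed

lemma var_unb: "unbiased2 n M c \<Longrightarrow> b > 0 \<Longrightarrow> Var n M a b (linest n c) = b\<^sup>2 * (dd n c \<bullet> (Smat n M *\<^sub>v dd n c))"
  unfolding unb_facts(1) by (rule VarS[OF _ dd_carrier]) simp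

lemma blue_exists: "is_BLUE2 n M (cc n dS)"
  unfolding is_BLUE2_def
proof (intro conjI unb_cS allI impI)
  fix d a and b :: real assume d: "unbiased2 n M d" and b: "b > 0"
  have "dd n d \<bullet> (Smat n M *\<^sub>v dd n d) \<ge> 1/q"
    using blue_min[OF dd_carrier unb_facts(2)[OF d]] dS_S_dS
      pd_nonneg[OF Spd dim_Smat minus_carrier_vec[OF dd_carrier dS_c]] by simp
  thus "Var n M a b (linest n (cc n dS)) \<le> Var n M a b (linest n d)"
    unfolding var_cS[OF b] var_unb[OF d b] using b by (intro mult_left_mono) auto
qed

lemma blue_unique: assumes c: "is_BLUE2 n M c" shows "dd n c = dS"
proof -
  have u: "unbiased2 n M c" using c unfolding is_BLUE2_def by blast
  have "Var n M 0 1 (linest n c) \<le> Var n M 0 1 (linest n (cc n dS))"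
    using c unb_cS unfolding is_BLUE2_def by auto
  moreover have "Var n M 0 1 (linest n c) = 1\<^sup>2 * (dd n c \<bullet> (Smat n M *\<^sub>v dd n c))"
    by (rule var_unb[OF u]) simp
  moreover have "Var n M 0 1 (linest n (cc n dS)) = 1\<^sup>2 * (1/q)" by (rule var_cS) simp
  ultimately have "dd n c \<bullet> (Smat n M *\<^sub>v dd n c) \<le> 1/q" by simp
  hence "(dd n c - dS) \<bullet> (Smat n M *\<^sub>v (dd n c - dS)) \<le> 0"
    using blue_min[OF dd_carrier unb_facts(2)[OF u]] dS_S_dS by simp
  hence "dd n c - dS = 0\<^sub>v (n-1)"
    by (rule pd_zero[OF Spd dim_Smat minus_carrier_vec[OF dd_carrier dS_c]])
  thus ?thesis by (rule vec_eq_diff[OF _ dd_carrier dS_c])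
qed

lemma mse_inv: assumes that: "b > 0" and "invariant2 n c" shows
   "MSE2 n M a b (linest n c) = b\<^sup>2 * (dd n c \<bullet> (Dmat n M *\<^sub>v dd n c) - 2 * (dd n c \<bullet> mvec n M) + 1)"
proof -
  have s: "(\<Sum>j\<in>{1..n}. c j) = 0" using \<open>invariant2 n c\<close> inv_iff by auto
  show ?thesis unfolding linest_dd[OF s] by (rule V3[OF _ dd_carrier]) (use that in simp)
qed

lemma inv_cD: "invariant2 n (cc n dD)" unfolding inv_iff using cc_sum[OF n2] .

lemma dD_D_dD: "dD \<bullet> (Dmat n M *\<^sub>v dD) = dD \<bullet> mvec n M" unfolding D_dD ..

lemma mse_cD: assumes b: "b > 0" shows "MSE2 n M a b (linest n (cc n dD)) = b\<^sup>2 * (1 - dD \<bullet> mvec n M)"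
proof -
  have "MSE2 n M a b (\<lambda>\<omega>. Lf n dD (\<lambda>j. pmax j \<omega>)) = b\<^sup>2 * (dD \<bullet> (Dmat n M *\<^sub>v dD) - 2 * (dD \<bullet> mvec n M) + 1)"
    by (rule V3[OF _ dD_c]) (use b in simp)
  thus ?thesis unfolding linest_cc dD_D_dD by simp
qed

lemma blie_exists: "is_BLIE2 n M (cc n dD)"
  unfolding is_BLIE2_def
proof (intro conjI inv_cD allI impI)
  fix d a and b :: real assume d: "invariant2 n d" and b: "b > 0"
  have "dd n d \<bullet> (Dmat n M *\<^sub>v dd n d) - 2 * (dd n d \<bullet> mvec n M) + 1 \<ge> 1 - dD \<bullet> mvec n M"
    using blie_min[OF dd_carrier] pd_nonneg[OF Dpd dim_Dmat minus_carrier_vec[OF dd_carrier dD_c]] by simp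
  thus "MSE2 n M a b (linest n (cc n dD)) \<le> MSE2 n M a b (linest n d)"
    unfolding mse_cD[OF b] mse_inv[OF b d] using b by (intro mult_left_mono) auto
qed

lemma blie_unique: assumes c: "is_BLIE2 n M c" shows "dd n c = dD"
proof -
  have u: "invariant2 n c" using c unfolding is_BLIE2_def by blast
  have "MSE2 n M 0 1 (linest n c) \<le> MSE2 n M 0 1 (linest n (cc n dD))"
    using c inv_cD unfolding is_BLIE2_def by auto
  hence "dd n c \<bullet> (Dmat n M *\<^sub>v dd n c) - 2 * (dd n c \<bullet> mvec n M) + 1 \<le> 1 - dD \<bullet> mvec n M"
    using mse_cD[of 1 0] mse_inv[of 1 c 0] u by simp
  hence "(dd n c - dD) \<bullet> (Dmat n M *\<^sub>v (dd n c - dD)) \<le> 0"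
    using blie_min[OF dd_carrier] by simp
  hence "dd n c - dD = 0\<^sub>v (n-1)"
    by (rule pd_zero[OF Dpd dim_Dmat minus_carrier_vec[OF dd_carrier dD_c]])
  thus ?thesis by (rule vec_eq_diff[OF _ dd_carrier dD_c])
qed

lemma main:
  shows
    "(\<exists>c. is_BLUE2 n M c) \<and>
     (\<forall>c. is_BLUE2 n M c \<longrightarrow>
        (\<forall>y. linform n c y =
           (mvec n M \<bullet> (minv (Smat n M) *\<^sub>v spacings n y)) /
           (mvec n M \<bullet> (minv (Smat n M) *\<^sub>v mvec n M)))) \<and>
     (\<forall>a b. b > 0 \<longrightarrow>
        Var n M a b (\<lambda>\<omega>. (mvec n M \<bullet> (minv (Smat n M) *\<^sub>v spacings n (\<lambda>j. pmax j \<omega>))) /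
                          (mvec n M \<bullet> (minv (Smat n M) *\<^sub>v mvec n M)))
        = b\<^sup>2 / (mvec n M \<bullet> (minv (Smat n M) *\<^sub>v mvec n M))) \<and>
     (\<exists>c. is_BLIE2 n M c) \<and>
     (\<forall>c. is_BLIE2 n M c \<longrightarrow>
        (\<forall>y. linform n c y = mvec n M \<bullet> (minv (Dmat n M) *\<^sub>v spacings n y))) \<and>
     (\<forall>a b. b > 0 \<longrightarrow>
        MSE2 n M a b (\<lambda>\<omega>. mvec n M \<bullet> (minv (Dmat n M) *\<^sub>v spacings n (\<lambda>j. pmax j \<omega>)))
        = (1 - mvec n M \<bullet> (minv (Dmat n M) *\<^sub>v mvec n M)) * b\<^sup>2)"
proof -
  have qd: "mvec n M \<bullet> (minv (Smat n M) *\<^sub>v mvec n M) = q" by (simp add: q_def wS_def)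
  have fS: "(\<lambda>\<omega>. (mvec n M \<bullet> (minv (Smat n M) *\<^sub>v spacings n (\<lambda>j. pmax j \<omega>))) / q)
      = (\<lambda>\<omega>. Lf n dS (\<lambda>j. pmax j \<omega>))" by (intro ext form_S)
  have fD: "(\<lambda>\<omega>. mvec n M \<bullet> (minv (Dmat n M) *\<^sub>v spacings n (\<lambda>j. pmax j \<omega>)))
      = (\<lambda>\<omega>. Lf n dD (\<lambda>j. pmax j \<omega>))" by (intro ext form_D)
  have p1: "\<forall>c. is_BLUE2 n M c \<longrightarrow> (\<forall>y. linform n c y = (mvec n M \<bullet> (minv (Smat n M) *\<^sub>v spacings n y)) / q)"
  proof (intro allI impI)
    fix c y assume c: "is_BLUE2 n M c"
    have u: "unbiased2 n M c" using c unfolding is_BLUE2_def by blast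
    have s: "(\<Sum>j\<in>{1..n}. c j) = 0" using u unb_iff by auto
    show "linform n c y = (mvec n M \<bullet> (minv (Smat n M) *\<^sub>v spacings n y)) / q"
    proof -
      have "linform n c y = Lf n (dd n c) y" by (rule linform_dd[OF _ s]) (use n2 in simp)
      thus ?thesis unfolding form_S blue_unique[OF c] .
    qed
  qed
  have p2: "\<forall>a b. b > 0 \<longrightarrow> Var n M a b (\<lambda>\<omega>. (mvec n M \<bullet> (minv (Smat n M) *\<^sub>v spacings n (\<lambda>j. pmax j \<omega>))) / q) = b\<^sup>2 / q"
    unfolding fS using var_cS unfolding linest_cc by simp
  have p3: "\<forall>c. is_BLIE2 n M c \<longrightarrow> (\<forall>y. linform n c y = mvec n M \<bullet> (minv (Dmat n M) *\<^sub>v spacings n y))"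
  proof (intro allI impI)
    fix c y assume c: "is_BLIE2 n M c"
    have u: "invariant2 n c" using c unfolding is_BLIE2_def by blast
    have s: "(\<Sum>j\<in>{1..n}. c j) = 0" using u inv_iff by auto
    show "linform n c y = mvec n M \<bullet> (minv (Dmat n M) *\<^sub>v spacings n y)"
    proof -
      have "linform n c y = Lf n (dd n c) y" by (rule linform_dd[OF _ s]) (use n2 in simp)
      thus ?thesis unfolding form_D blie_unique[OF c] .
    qed
  qed
  have p4: "\<forall>a b. b > 0 \<longrightarrow> MSE2 n M a b (\<lambda>\<omega>. mvec n M \<bullet> (minv (Dmat n M) *\<^sub>v spacings n (\<lambda>j. pmax j \<omega>)))
        = (1 - mvec n M \<bullet> (minv (Dmat n M) *\<^sub>v mvec n M)) * b\<^sup>2"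
    unfolding fD using mse_cD unfolding linest_cc dD_m by (simp add: mult.commute)
  show ?thesis unfolding qd using blue_exists blie_exists p1 p2 p3 p4 by blast
qed

end

theorem proposition4p1:
  fixes n :: nat and M :: "real measure"
  assumes n2: "n \<ge> 2"
    and distr: "real_distribution M"
    and nondeg: "\<forall>c. measure M {c} \<noteq> 1"
    and finvar: "integrable M (\<lambda>x. x\<^sup>2)"
    and S_pd: "pos_def_mat (Smat n M)"
    and D_pd: "pos_def_mat (Dmat n M)"
  shows
    "(\<exists>c. is_BLUE2 n M c) \<and>
     (\<forall>c. is_BLUE2 n M c \<longrightarrow>
        (\<forall>y. linform n c y =
           (mvec n M \<bullet> (minv (Smat n M) *\<^sub>v spacings n y)) /
           (mvec n M \<bullet> (minv (Smat n M) *\<^sub>v mvec n M)))) \<and>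
     (\<forall>a b. b > 0 \<longrightarrow>
        Var n M a b (\<lambda>\<omega>. (mvec n M \<bullet> (minv (Smat n M) *\<^sub>v spacings n (\<lambda>j. pmax j \<omega>))) /
                          (mvec n M \<bullet> (minv (Smat n M) *\<^sub>v mvec n M)))
        = b\<^sup>2 / (mvec n M \<bullet> (minv (Smat n M) *\<^sub>v mvec n M))) \<and>
     (\<exists>c. is_BLIE2 n M c) \<and>
     (\<forall>c. is_BLIE2 n M c \<longrightarrow>
        (\<forall>y. linform n c y = mvec n M \<bullet> (minv (Dmat n M) *\<^sub>v spacings n y))) \<and>
     (\<forall>a b. b > 0 \<longrightarrow>
        MSE2 n M a b (\<lambda>\<omega>. mvec n M \<bullet> (minv (Dmat n M) *\<^sub>v spacings n (\<lambda>j. pmax j \<omega>)))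
        = (1 - mvec n M \<bullet> (minv (Dmat n M) *\<^sub>v mvec n M)) * b\<^sup>2)"
proof -
  interpret pm_full n M
    unfolding pm_full_def pm_full_axioms_def pm_setting_def using n2 distr finvar S_pd D_pd by blast
  show ?thesis by (rule main)
qed

end
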